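(* Assume the setting and regularity hypotheses of the generalized Cramér–Rao theorem stated in the context, and suppose in addition that $f$ and $g$ form a pair of escort distributions of order $q>0$: $$f(x;\theta)=\frac{g(x;\theta)^q}{M_q[g;\theta]},\qquad g(x;\theta)=\frac{f(x;\theta)^{\bar q}}{M_{\bar q}[f;\theta]},\qquad \bar q=1/q,$$ where $M_q[g;\theta]=\int_X g(x;\theta)^q\,\mathrm{d}x$. Let $\alpha\ge1$, $\alpha^{-1}+\beta^{-1}=1$. Then for any estimator $\hat\theta$, $$\Big(\int_X\|\hat\theta(x)-\theta\|^{\alpha}g(x;\theta)\,\mathrm{d}x\Big)^{1/\alpha} I_{\beta,q}[f|g;\theta]^{1/\beta}\ \ge\ \Big|n+\nabla_\theta\cdot\int_X(\hat\theta(x)-\theta)f(x;\theta)\,\mathrm{d}x\Big|$$ (in escort notation: with $E$ the expectation under $g$ and $E_q$ the $q$-escort expectation, the left moment is $E[\|\hat\theta-\theta\|^\alpha]$ and the bias is $E_q[\hat\theta-\theta]$; equivalently, with $E$ the expectation under $f$, the left moment is $E_{\bar q}[\|\hat\theta-\theta\|^\alpha]$ and the bias is $E[\hat\theta-\theta]$), where the generalized $(\beta,q)$-Fisher information is $$I_{\beta,q}[f|g;\theta]=\frac{1}{M_q[g;\theta]^{\beta}}\int_X g(x;\theta)^{\beta(q-1)}\Big\|\nabla_\theta\ln\frac{g(x;\theta)^q}{M_q[g;\theta]}\Big\|_*^{\beta}g(x;\theta)\,\mathrm{d}x = M_{\bar q}[f;\theta]^{\beta}\int_X f(x;\theta)^{\beta(1-\bar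 q)}\|\nabla_\theta\ln f(x;\theta)\|_*^{\beta}\,g(x;\theta)\,\mathrm{d}x.$$ Equality holds if $\nabla_\theta\ln_{\bar q}f(x;\theta)=K\|\hat\theta(x)-\theta\|^{\alpha-1}\nabla_{\hat\theta(x)-\theta}\|\hat\theta(x)-\theta\|$ for some $K>0$.
   Context: Setting of the generalized Cramér–Rao theorem: $X\subseteq\mathbb{R}^m$, $\Theta\subseteq\mathbb{R}^n$ open, $\mathbb{R}^n$ equipped with a norm $\|\cdot\|$ and dual norm $\|Y\|_*=\sup_{\|X\|\le1}X\cdot Y$; $f(x;\theta),g(x;\theta)$ probability densities on $X$; $f$ jointly measurable, integrable in $x$, absolutely continuous in $\theta$ with locally integrable $\theta$-derivatives allowing differentiation under the integral; $\nabla_\theta f$ absolutely continuous with respect to $g$; $\hat\theta:X\to\mathbb{R}^n$ an estimator with all quantities finite. $\nabla_\theta\cdot$ is the divergence in $\theta$. The $q$-logarithm is $\ln_q(x)=\frac{x^{1-q}-1}{1-q}$ for $q\ne1$ and $\ln_1=\ln$. $\nabla_v\|v\|$ is the gradient of the norm at $v$. *)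

theory Defs
  imports "HOL-Analysis.Analysis" "HOL-Probability.Essential_Supremum"
begin

definition is_norm :: "('a::real_vector \<Rightarrow> real) \<Rightarrow> bool" where
  "is_norm N \<longleftrightarrow> (\<forall>x. 0 \<le> N x) \<and> (\<forall>x. N x = 0 \<longleftrightarrow> x = 0)
     \<and> (\<forall>c x. N (c *\<^sub>R x) = \<bar>c\<bar> * N x) \<and> (\<forall>x y. N (x + y) \<le> N x + N y)"

definition dual_norm :: "(real^'n \<Rightarrow> real) \<Rightarrow> real^'n \<Rightarrow> real" where
  "dual_norm N y = Sup {x \<bullet> y | x. N x \<le> 1}"

definition grad :: "(real^'n \<Rightarrow> real) \<Rightarrow> real^'n \<Rightarrow> real^'n" where
  "grad h t = (SOME G. (h has_derivative (\<lambda>v. G \<bullet> v)) (at t))"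

definition divergence :: "(real^'n \<Rightarrow> real^'n) \<Rightarrow> real^'n \<Rightarrow> real" where
  "divergence B t = (\<Sum>j\<in>UNIV. deriv (\<lambda>s. B (t + s *\<^sub>R axis j 1) $ j) 0)"

definition qlog :: "real \<Rightarrow> real \<Rightarrow> real" where
  "qlog q x = (if q = 1 then ln x else (x powr (1 - q) - 1) / (1 - q))"

definition qmass :: "(real^'m) set \<Rightarrow> real \<Rightarrow> (real^'m \<Rightarrow> real^'n \<Rightarrow> real) \<Rightarrow> real^'n \<Rightarrow> real" where
  "qmass X q h t = (LINT x:X|lebesgue. h x t powr q)"

definition fisher_info :: "(real^'n \<Rightarrow> real) \<Rightarrow> real \<Rightarrow> real \<Rightarrow> (real^'m) set
    \<Rightarrow> (real^'m \<Rightarrow> real^'n \<Rightarrow> real) \<Rightarrow> (real^'m \<Rightarrow> real^'n \<Rightarrow> real) \<Rightarrow> real^'n \<Rightarrow> real" where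
  "fisher_info N \<beta> q X f g t =
     qmass X (1/q) f t powr \<beta> *
     (LINT x:X|lebesgue. f x t powr (\<beta> * (1 - 1/q))
        * dual_norm N (grad (\<lambda>s. ln (f x s)) t) powr \<beta> * g x t)"

text \<open>The function whose g-essential supremum is I_{infinity,q}^{1/infinity} (case alpha = 1,
  beta = infinity): M_{1/q}[f;t] f^{1-1/q} ||grad_t ln f||_*.\<close>
definition fisher_ess :: "(real^'n \<Rightarrow> real) \<Rightarrow> real \<Rightarrow> (real^'m) set
    \<Rightarrow> (real^'m \<Rightarrow> real^'n \<Rightarrow> real) \<Rightarrow> (real^'m \<Rightarrow> real^'n \<Rightarrow> real) \<Rightarrow> real^'n \<Rightarrow> ereal" where
  "fisher_ess N q X f g t =
     esssup (density lebesgue (\<lambda>x. indicator X x * ennreal (g x t)))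
       (\<lambda>x. ereal (qmass X (1/q) f t * f x t powr (1 - 1/q) * dual_norm N (grad (\<lambda>s. ln (f x s)) t)))"

definition fisher_root :: "(real^'n \<Rightarrow> real) \<Rightarrow> real \<Rightarrow> real \<Rightarrow> (real^'m) set
    \<Rightarrow> (real^'m \<Rightarrow> real^'n \<Rightarrow> real) \<Rightarrow> (real^'m \<Rightarrow> real^'n \<Rightarrow> real) \<Rightarrow> real^'n \<Rightarrow> real" where
  "fisher_root N \<alpha> q X f g t =
     (if \<alpha> = 1 then real_of_ereal (fisher_ess N q X f g t)
      else fisher_info N (\<alpha> / (\<alpha> - 1)) q X f g t powr ((\<alpha> - 1) / \<alpha>))"

end

theory Submission
  imports Defs
begin

lemma normN_basic:
  assumes "is_norm N"
  shows "N 0 = 0" "\<And>x. N (-x) = N x" "\<And>x. 0 \<le> N x" "\<And>x y. N (x+y) \<le> N x + N y"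
    "\<And>c x. N (c *\<^sub>R x) = \<bar>c\<bar> * N x" "\<And>x. N x = 0 \<longleftrightarrow> x = 0"
  using assms unfolding is_norm_def
  apply (simp_all)
  by (metis abs_minus_cancel abs_one mult_1 scaleR_minus1_left)

lemma normN_convex:
  assumes "is_norm N"
  shows "convex_on UNIV N"
proof (rule convex_onI)
  fix t :: real and x y :: 'a assume t: "0 < t" "t < 1"
  have "N ((1 - t) *\<^sub>R x + t *\<^sub>R y) \<le> N ((1 - t) *\<^sub>R x) + N (t *\<^sub>R y)"
    using normN_basic[OF assms] by blast
  also have "\<dots> = (1 - t) * N x + t * N y" using normN_basic(5)[OF assms] t by simp
  finally show "N ((1 - t) *\<^sub>R x + t *\<^sub>R y) \<le> (1 - t) * N x + t * N y" .
qed auto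

lemma normN_sum:
  assumes "is_norm N"
  shows "N (sum f A) \<le> (\<Sum>i\<in>A. N (f i))"
proof (induction A rule: infinite_finite_induct)
  case (infinite A) then show ?case using normN_basic(1)[OF assms] by simp
next
  case empty then show ?case using normN_basic(1)[OF assms] by simp
next
  case (insert x F)
  then show ?case using normN_basic(4)[OF assms, of "f x" "sum f F"] by simp
qed

lemma normN_upper:
  fixes N :: "real^'n \<Rightarrow> real"
  assumes "is_norm N"
  shows "\<exists>C\<ge>0. \<forall>x. N x \<le> C * norm x"
proof -
  define C where "C = (\<Sum>i\<in>UNIV. N (axis i 1))"
  have "C \<ge> 0" unfolding C_def using normN_basic(3)[OF assms] by (simp add: sum_nonneg)
  moreover have "N x \<le> C * norm x" for x
  proof -
    have "x = (\<Sum>i\<in>UNIV. (x $ i) *\<^sub>R axis i 1)"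
      using basis_expansion[of x] by (simp add: scalar_mult_eq_scaleR)
    then have "N x \<le> (\<Sum>i\<in>UNIV. N ((x $ i) *\<^sub>R axis i 1))"
      using normN_sum[OF assms, of "\<lambda>i. (x $ i) *\<^sub>R axis i 1" UNIV] by simp
    also have "\<dots> = (\<Sum>i\<in>UNIV. \<bar>x $ i\<bar> * N (axis i 1))"
      using normN_basic(5)[OF assms] by simp
    also have "\<dots> \<le> (\<Sum>i\<in>UNIV. norm x * N (axis i 1))"
      by (intro sum_mono mult_right_mono) (auto simp: component_le_norm_cart normN_basic(3)[OF assms])
    also have "\<dots> = C * norm x" unfolding C_def by (simp add: sum_distrib_left mult.commute)
    finally show ?thesis .
  qed
  ultimately show ?thesis by blast
qed

lemma normN_cont:
  fixes N :: "real^'n \<Rightarrow> real"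
  assumes "is_norm N"
  shows "continuous_on S N"
proof -
  obtain C where C: "C \<ge> 0" "\<And>x. N x \<le> C * norm x" using normN_upper[OF assms] by blast
  have "\<bar>N x - N y\<bar> \<le> C * dist x y" for x y
  proof -
    have "N x \<le> N y + N (x - y)" using normN_basic(4)[OF assms, of y "x-y"] by simp
    moreover have "N y \<le> N x + N (y - x)" using normN_basic(4)[OF assms, of x "y-x"] by simp
    moreover have "N (y - x) = N (x - y)" using normN_basic(2)[OF assms, of "x - y"] by simp
    moreover have "N (x - y) \<le> C * dist x y" using C(2)[of "x-y"] by (simp add: dist_norm)
    ultimately show ?thesis by linarith
  qed
  then have "C-lipschitz_on S N"
    by (intro lipschitz_onI) (auto simp: dist_real_def C)
  then show ?thesis using lipschitz_on_continuous_on by blast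
qed

lemma normN_lower:
  fixes N :: "real^'n \<Rightarrow> real"
  assumes "is_norm N"
  shows "\<exists>c>0. \<forall>x. c * norm x \<le> N x"
proof -
  have "compact (sphere (0::real^'n) 1)" by simp
  moreover have "sphere (0::real^'n) 1 \<noteq> {}" by simp
  ultimately obtain z where z: "z \<in> sphere 0 1" "\<And>y. y \<in> sphere 0 1 \<Longrightarrow> N z \<le> N y"
    using continuous_attains_inf[OF _ _ normN_cont[OF assms]] by metis
  have "z \<noteq> 0" using z(1) by auto
  then have c: "N z > 0" using normN_basic(3,6)[OF assms, of z] by auto
  have "N z * norm x \<le> N x" for x
  proof (cases "x = 0")
    case True then show ?thesis using normN_basic(1)[OF assms] by simp
  next
    case False
    then have "N z \<le> N ((1 / norm x) *\<^sub>R x)" by (intro z(2)) auto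
    also have "\<dots> = N x / norm x" using normN_basic(5)[OF assms] by simp
    finally show ?thesis using False by (simp add: field_simps)
  qed
  then show ?thesis using c by blast
qed

lemma dual_bdd:
  fixes N :: "real^'n \<Rightarrow> real"
  assumes "is_norm N"
  shows "bdd_above {x \<bullet> y | x. N x \<le> 1}"
proof -
  obtain c where c: "c > 0" "\<And>x. c * norm x \<le> N x" using normN_lower[OF assms] by blast
  have "x \<bullet> y \<le> norm y / c" if "N x \<le> 1" for x
  proof -
    have "c * norm x \<le> 1" using c(2)[of x] that by linarith
    then have "norm x \<le> 1 / c" using c(1) by (simp add: field_simps)
    have "x \<bullet> y \<le> norm x * norm y" by (simp add: norm_cauchy_schwarz)
    also have "\<dots> \<le> (1/c) * norm y" by (intro mult_right_mono) (use \<open>norm x \<le> 1/c\<close> in auto)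
    finally show ?thesis by simp
  qed
  then show ?thesis unfolding bdd_above_def by blast
qed

lemma dual_nonneg:
  fixes N :: "real^'n \<Rightarrow> real"
  assumes "is_norm N"
  shows "0 \<le> dual_norm N y"
proof -
  have "0 = (0::real^'n) \<bullet> y \<and> N 0 \<le> 1" using normN_basic(1)[OF assms] by simp
  then have "0 \<in> {x \<bullet> y | x. N x \<le> 1}" by blast
  then show ?thesis unfolding dual_norm_def using cSup_upper[OF _ dual_bdd[OF assms]] by blast
qed

lemma dual_ineq:
  fixes N :: "real^'n \<Rightarrow> real"
  assumes "is_norm N"
  shows "x \<bullet> y \<le> N x * dual_norm N y"
proof (cases "x = 0")
  case True then show ?thesis using normN_basic(1)[OF assms] by simp
next
  case False
  then have Np: "N x > 0" using normN_basic(3,6)[OF assms, of x] by auto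
  have "((1 / N x) *\<^sub>R x) \<bullet> y \<le> dual_norm N y"
    unfolding dual_norm_def
  proof (rule cSup_upper[OF _ dual_bdd[OF assms]])
    have "N ((1 / N x) *\<^sub>R x) \<le> 1" using Np normN_basic(5)[OF assms, of "1 / N x" x] by simp
    then show "((1 / N x) *\<^sub>R x) \<bullet> y \<in> {x \<bullet> y |x. N x \<le> 1}" by blast
  qed
  then show ?thesis using Np by (simp add: field_simps)
qed

lemma dual_abs_ineq:
  fixes N :: "real^'n \<Rightarrow> real"
  assumes "is_norm N"
  shows "\<bar>x \<bullet> y\<bar> \<le> N x * dual_norm N y"
  using dual_ineq[OF assms, of x y] dual_ineq[OF assms, of "-x" y] normN_basic(2)[OF assms, of x]
  by (simp add: abs_le_iff)

lemma norm_tangent: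
  fixes N :: "real^'n \<Rightarrow> real"
  assumes N: "is_norm N" and D: "(N has_derivative (\<lambda>h. G \<bullet> h)) (at e)"
  shows "G \<bullet> x \<le> N (e + x) - N e"
proof -
  define \<phi> where "\<phi> t = N (e + t *\<^sub>R x)" for t :: real
  have cv: "convex_on UNIV \<phi>"
  proof (rule convex_onI)
    fix u s t :: real assume u: "0 < u" "u < 1"
    have "e + ((1 - u) * s + u * t) *\<^sub>R x = (1 - u) *\<^sub>R (e + s *\<^sub>R x) + u *\<^sub>R (e + t *\<^sub>R x)"
      by (simp add: algebra_simps)
    then show "\<phi> ((1 - u) *\<^sub>R s + u *\<^sub>R t) \<le> (1 - u) * \<phi> s + u * \<phi> t"
      unfolding \<phi>_def using convex_onD[OF normN_convex[OF N], of u "e + s *\<^sub>R x" "e + t *\<^sub>R x"] u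
      by simp
  qed auto
  have "((\<lambda>t. e + t *\<^sub>R x) has_derivative (\<lambda>t. t *\<^sub>R x)) (at 0)"
    by (auto intro!: derivative_eq_intros)
  then have "(\<phi> has_derivative (\<lambda>t. G \<bullet> (t *\<^sub>R x))) (at 0)"
  proof -
    have D': "(N has_derivative (\<lambda>h. G \<bullet> h)) (at (e + 0 *\<^sub>R x))" using D by simp
    show ?thesis unfolding \<phi>_def using has_derivative_compose[OF \<open>((\<lambda>t. e + t *\<^sub>R x) has_derivative (\<lambda>t. t *\<^sub>R x)) (at 0)\<close> D'] by simp
  qed
  then have "(\<phi> has_field_derivative (G \<bullet> x)) (at 0)"
    unfolding has_field_derivative_def by (rule has_derivative_eq_rhs) (auto simp: mult.commute)
  then have "\<phi> 1 - \<phi> 0 \<ge> (G \<bullet> x) * (1 - 0)"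
    by (intro convex_on_imp_above_tangent[OF cv]) auto
  then show ?thesis unfolding \<phi>_def by simp
qed

lemma norm_tangent2:
  fixes N :: "real^'n \<Rightarrow> real"
  assumes N: "is_norm N" and D: "(N has_derivative (\<lambda>h. G \<bullet> h)) (at e)"
  shows "G \<bullet> x \<le> N x" "G \<bullet> e = N e"
proof -
  show "G \<bullet> x \<le> N x" using norm_tangent[OF N D, of x] normN_basic(4)[OF N, of e x] by linarith
  have a: "G \<bullet> (-e) \<le> N (e + -e) - N e" by (rule norm_tangent[OF N D])
  have b: "G \<bullet> e \<le> N (e + e) - N e" by (rule norm_tangent[OF N D])
  have "N (e + e) = 2 * N e" using normN_basic(5)[OF N, of 2 e] by (simp add: scaleR_2)
  then show "G \<bullet> e = N e" using a b normN_basic(1)[OF N] by (simp add: inner_minus_right)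
qed

lemma dual_tangent:
  fixes N :: "real^'n \<Rightarrow> real"
  assumes N: "is_norm N" and D: "(N has_derivative (\<lambda>h. G \<bullet> h)) (at e)" and e: "e \<noteq> 0"
    and c: "c \<ge> 0"
  shows "dual_norm N (c *\<^sub>R G) = c"
  unfolding dual_norm_def
proof (rule cSup_eq_maximum)
  have Ne: "N e > 0" using normN_basic(3,6)[OF N, of e] e by auto
  have "N ((1 / N e) *\<^sub>R e) \<le> 1" using Ne normN_basic(5)[OF N, of "1 / N e" e] by simp
  moreover have "((1 / N e) *\<^sub>R e) \<bullet> (c *\<^sub>R G) = c"
    using norm_tangent2(2)[OF N D] Ne by (simp add: inner_commute)
  ultimately show "c \<in> {x \<bullet> c *\<^sub>R G |x. N x \<le> 1}" by (metis (mono_tags, lifting) mem_Collect_eq)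
next
  fix y assume "y \<in> {x \<bullet> c *\<^sub>R G |x. N x \<le> 1}"
  then obtain x where x: "y = x \<bullet> c *\<^sub>R G" "N x \<le> 1" by blast
  have "G \<bullet> x \<le> 1" using norm_tangent2(1)[OF N D, of x] x(2) by linarith
  then have "c * (G \<bullet> x) \<le> c * 1" by (intro mult_left_mono c)
  then show "y \<le> c" using x(1) by (simp add: inner_commute)
qed

lemma holder_aux_zero:
  fixes a b :: "'a \<Rightarrow> real"
  assumes p: "p > 0" and am: "a \<in> borel_measurable M" and a0: "\<And>x. 0 \<le> a x"
    and ai: "integrable M (\<lambda>x. a x powr p)" and A0: "integral\<^sup>L M (\<lambda>x. a x powr p) = 0"
  shows "integral\<^sup>L M (\<lambda>x. a x * b x) = 0"
proof -
  have "AE x in M. a x powr p = 0"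
    using integral_nonneg_eq_0_iff_AE[OF ai] A0 by simp
  then have "AE x in M. a x * b x = 0" by eventually_elim simp
  then show ?thesis by (simp add: integral_eq_zero_AE)
qed

lemma holder:
  fixes a b :: "'a \<Rightarrow> real"
  assumes p: "p > 1" and pq: "1/p + 1/q = 1"
    and am: "a \<in> borel_measurable M" and a0: "\<And>x. 0 \<le> a x" and ai: "integrable M (\<lambda>x. a x powr p)"
    and bm: "b \<in> borel_measurable M" and b0: "\<And>x. 0 \<le> b x" and bi: "integrable M (\<lambda>x. b x powr q)"
  shows "integrable M (\<lambda>x. a x * b x)"
    "integral\<^sup>L M (\<lambda>x. a x * b x) \<le> (integral\<^sup>L M (\<lambda>x. a x powr p)) powr (1/p) * (integral\<^sup>L M (\<lambda>x. b x powr q)) powr (1/q)"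
proof -
  have q: "q > 1"
  proof -
    have "1/q = 1 - 1/p" using pq by simp
    moreover have "0 < 1 - 1/p" "1 - 1/p < 1" using p by (auto simp: field_simps)
    ultimately have "0 < 1/q" "1/q < 1" by auto
    then show ?thesis by (simp add: field_simps split: if_splits)
  qed
  have Y: "a x * b x \<le> a x powr p / p + b x powr q / q" for x
    by (rule Youngs_inequality[OF p q pq a0 b0])
  show int: "integrable M (\<lambda>x. a x * b x)"
  proof (rule Bochner_Integration.integrable_bound[where f="\<lambda>x. a x powr p / p + b x powr q / q"])
    show "integrable M (\<lambda>x. a x powr p / p + b x powr q / q)" using ai bi by auto
    show "(\<lambda>x. a x * b x) \<in> borel_measurable M" using am bm by measurable
    show "AE x in M. norm (a x * b x) \<le> norm (a x powr p / p + b x powr q / q)"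
      using Y a0 b0 p q by (auto intro!: AE_I2 simp: abs_mult)
  qed
  define A where "A = integral\<^sup>L M (\<lambda>x. a x powr p)"
  define B where "B = integral\<^sup>L M (\<lambda>x. b x powr q)"
  have A0: "A \<ge> 0" unfolding A_def by (intro Bochner_Integration.integral_nonneg) simp
  have B0: "B \<ge> 0" unfolding B_def by (intro Bochner_Integration.integral_nonneg) simp
  show "integral\<^sup>L M (\<lambda>x. a x * b x) \<le> A powr (1/p) * B powr (1/q)"
  proof (cases "A = 0 \<or> B = 0")
    case True
    then have "integral\<^sup>L M (\<lambda>x. a x * b x) = 0"
    proof
      assume "A = 0"
      then show ?thesis using holder_aux_zero[OF _ am a0 ai] p unfolding A_def by simp
    next
      assume "B = 0"
      then show ?thesis using holder_aux_zero[OF _ bm b0 bi, of a] q unfolding B_def by (simp add: mult.commute)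
    qed
    then show ?thesis by simp
  next
    case False
    then have Ap: "A > 0" and Bp: "B > 0" using A0 B0 by auto
    define s where "s = A powr (1/p)"
    define t where "t = B powr (1/q)"
    have sp: "s > 0" "t > 0" unfolding s_def t_def using Ap Bp by auto
    have s_p: "s powr p = A" unfolding s_def using p Ap by (simp add: powr_powr)
    have t_q: "t powr q = B" unfolding t_def using q Bp by (simp add: powr_powr)
    have pw: "(a x / s) * (b x / t) \<le> a x powr p / (p * A) + b x powr q / (q * B)" for x
    proof -
      have "(a x / s) * (b x / t) \<le> (a x / s) powr p / p + (b x / t) powr q / q"
        by (rule Youngs_inequality[OF p q pq]) (use a0 b0 sp in auto)
      also have "\<dots> = a x powr p / (p * A) + b x powr q / (q * B)"
        using a0[of x] b0[of x] sp by (simp add: powr_divide s_p t_q mult.commute)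
      finally show ?thesis .
    qed
    have "integral\<^sup>L M (\<lambda>x. (a x / s) * (b x / t)) \<le> integral\<^sup>L M (\<lambda>x. a x powr p / (p * A) + b x powr q / (q * B))"
      by (intro Bochner_Integration.integral_mono pw) (use int ai bi in auto)
    also have "\<dots> = A / (p * A) + B / (q * B)"
      using ai bi unfolding A_def B_def by simp
    also have "\<dots> = 1" using Ap Bp pq by simp
    finally have "integral\<^sup>L M (\<lambda>x. a x * b x) / (s * t) \<le> 1" by simp
    then show ?thesis using sp unfolding s_def t_def by (simp add: field_simps)
  qed
qed

lemma si_conv:
  fixes f :: "_ \<Rightarrow> 'b::{banach,second_countable_topology}"
  assumes "X \<in> sets lebesgue"
  shows "set_integrable lebesgue X f \<longleftrightarrow> integrable (restrict_space lebesgue X) f"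
  unfolding set_integrable_def using integrable_restrict_space[of X lebesgue f] assms by simp

lemma sl_conv:
  fixes f :: "_ \<Rightarrow> 'b::{banach,second_countable_topology}"
  assumes "X \<in> sets lebesgue"
  shows "(LINT x:X|lebesgue. f x) = integral\<^sup>L (restrict_space lebesgue X) f"
  unfolding set_lebesgue_integral_def using integral_restrict_space[of X lebesgue f] assms by simp

lemma div_identity:
  fixes X :: "(real^'m) set" and \<Theta> :: "(real^'n) set"
    and f :: "real^'m \<Rightarrow> real^'n \<Rightarrow> real"
    and est :: "real^'m \<Rightarrow> real^'n"
    and \<theta> :: "real^'n"
  assumes X_meas: "X \<in> sets lebesgue"
    and Theta_open: "open \<Theta>" and theta_in: "\<theta> \<in> \<Theta>"
    and f_dens: "\<And>t. t \<in> \<Theta> \<Longrightarrow> set_integrable lebesgue X (\<lambda>x. f x t)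
                     \<and> (LINT x:X|lebesgue. f x t) = 1"
    and est_int: "\<And>t. t \<in> \<Theta> \<Longrightarrow> set_integrable lebesgue X (\<lambda>x. f x t *\<^sub>R est x)"
    and grad_int: "\<And>j. set_integrable lebesgue X (\<lambda>x. grad (\<lambda>t. f x t) \<theta> $ j)"
    and est_grad_int: "\<And>j. set_integrable lebesgue X (\<lambda>x. est x $ j * grad (\<lambda>t. f x t) \<theta> $ j)"
    and diff_int1: "\<And>j. ((\<lambda>s. LINT x:X|lebesgue. f x (\<theta> + s *\<^sub>R axis j 1))
                      has_real_derivative (LINT x:X|lebesgue. grad (\<lambda>t. f x t) \<theta> $ j)) (at 0)"
    and diff_int2: "\<And>j. ((\<lambda>s. LINT x:X|lebesgue. est x $ j * f x (\<theta> + s *\<^sub>R axis j 1))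
                      has_real_derivative (LINT x:X|lebesgue. est x $ j * grad (\<lambda>t. f x t) \<theta> $ j)) (at 0)"
  shows "real CARD('n) + divergence (\<lambda>t. LINT x:X|lebesgue. f x t *\<^sub>R (est x - t)) \<theta>
         = (LINT x:X|lebesgue. (est x - \<theta>) \<bullet> grad (\<lambda>t. f x t) \<theta>)"
proof -
  define MX where "MX = restrict_space lebesgue X"
  note conv = si_conv[OF X_meas, folded MX_def] sl_conv[OF X_meas, folded MX_def]
  define F where "F x = grad (\<lambda>t. f x t) \<theta>" for x
  define D1 where "D1 j = integral\<^sup>L MX (\<lambda>x. F x $ j)" for j
  define D2 where "D2 j = integral\<^sup>L MX (\<lambda>x. est x $ j * F x $ j)" for j
  obtain \<epsilon> where \<epsilon>: "\<epsilon> > 0" "ball \<theta> \<epsilon> \<subseteq> \<Theta>" using Theta_open theta_in open_contains_ball by blast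
  have inT: "\<theta> + s *\<^sub>R axis j 1 \<in> \<Theta>" if "s \<in> ball 0 \<epsilon>" for s j
    using that \<epsilon>(2) by (auto simp: dist_norm)
  have fI: "integrable MX (\<lambda>x. f x t)" "integral\<^sup>L MX (\<lambda>x. f x t) = 1" if "t \<in> \<Theta>" for t
    using f_dens[OF that] by (simp_all add: conv)
  have eI: "integrable MX (\<lambda>x. f x t *\<^sub>R est x)" if "t \<in> \<Theta>" for t
    using est_int[OF that] by (simp add: conv)
  have key: "deriv (\<lambda>s. (LINT x:X|lebesgue. f x (\<theta> + s *\<^sub>R axis j 1) *\<^sub>R (est x - (\<theta> + s *\<^sub>R axis j 1))) $ j) 0
        = D2 j - 1" and D1z: "D1 j = 0" for j
  proof -
    have d1: "((\<lambda>s. integral\<^sup>L MX (\<lambda>x. f x (\<theta> + s *\<^sub>R axis j 1))) has_real_derivative D1 j) (at 0)"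
      using diff_int1[of j] unfolding D1_def F_def conv .
    have "((\<lambda>s. 1::real) has_real_derivative D1 j) (at 0)"
      by (rule has_field_derivative_transform_within_open[OF d1, of "ball 0 \<epsilon>"]) (use \<epsilon> fI inT in auto)
    then show "D1 j = 0" using DERIV_unique DERIV_const by blast
    have d2: "((\<lambda>s. integral\<^sup>L MX (\<lambda>x. est x $ j * f x (\<theta> + s *\<^sub>R axis j 1))) has_real_derivative D2 j) (at 0)"
      using diff_int2[of j] unfolding D2_def F_def conv .
    have d3: "((\<lambda>s. integral\<^sup>L MX (\<lambda>x. est x $ j * f x (\<theta> + s *\<^sub>R axis j 1)) - (\<theta> $ j + s)) has_real_derivative D2 j - 1) (at 0)"
      by (auto intro!: derivative_eq_intros d2)
    have eq: "(LINT x:X|lebesgue. f x (\<theta> + s *\<^sub>R axis j 1) *\<^sub>R (est x - (\<theta> + s *\<^sub>R axis j 1))) $ j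
          = integral\<^sup>L MX (\<lambda>x. est x $ j * f x (\<theta> + s *\<^sub>R axis j 1)) - (\<theta> $ j + s)"
      if s: "s \<in> ball 0 \<epsilon>" for s
    proof -
      define t where "t = \<theta> + s *\<^sub>R axis j 1"
      have t: "t \<in> \<Theta>" unfolding t_def using inT[OF s] .
      have i1: "integrable MX (\<lambda>x. f x t *\<^sub>R est x)" using eI[OF t] .
      have i2: "integrable MX (\<lambda>x. f x t *\<^sub>R t)" using fI(1)[OF t] by auto
      have i3: "integrable MX (\<lambda>x. f x t *\<^sub>R (est x - t))"
        using Bochner_Integration.integrable_diff[OF i1 i2] by (simp add: algebra_simps)
      have "(LINT x:X|lebesgue. f x t *\<^sub>R (est x - t)) $ j = integral\<^sup>L MX (\<lambda>x. (f x t *\<^sub>R (est x - t)) $ j)"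
        unfolding conv by (rule integral_bounded_linear[OF bounded_linear_vec_nth i3, symmetric])
      also have "\<dots> = integral\<^sup>L MX (\<lambda>x. (f x t *\<^sub>R est x) $ j - t $ j * f x t)"
        by (simp add: algebra_simps)
      also have "\<dots> = integral\<^sup>L MX (\<lambda>x. (f x t *\<^sub>R est x) $ j) - integral\<^sup>L MX (\<lambda>x. t $ j * f x t)"
        by (rule Bochner_Integration.integral_diff)
           (use integrable_bounded_linear[OF bounded_linear_vec_nth i1] fI(1)[OF t] in auto)
      also have "\<dots> = integral\<^sup>L MX (\<lambda>x. est x $ j * f x t) - t $ j"
        using fI[OF t] by (simp add: mult.commute)
      also have "t $ j = \<theta> $ j + s" unfolding t_def by (simp add: axis_def)
      finally show ?thesis unfolding t_def .
    qed
    have "((\<lambda>s. (LINT x:X|lebesgue. f x (\<theta> + s *\<^sub>R axis j 1) *\<^sub>R (est x - (\<theta> + s *\<^sub>R axis j 1))) $ j) has_real_derivative D2 j - 1) (at 0)"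
      by (rule has_field_derivative_transform_within_open[OF d3, of "ball 0 \<epsilon>"]) (use \<epsilon> eq in auto)
    then show "deriv (\<lambda>s. (LINT x:X|lebesgue. f x (\<theta> + s *\<^sub>R axis j 1) *\<^sub>R (est x - (\<theta> + s *\<^sub>R axis j 1))) $ j) 0 = D2 j - 1"
      by (rule DERIV_imp_deriv)
  qed
  have div: "divergence (\<lambda>t. LINT x:X|lebesgue. f x t *\<^sub>R (est x - t)) \<theta> = (\<Sum>j\<in>UNIV. D2 j - 1)"
    unfolding divergence_def using key by simp
  have gI: "integrable MX (\<lambda>x. F x $ j)" "integrable MX (\<lambda>x. est x $ j * F x $ j)" for j
    using grad_int[of j] est_grad_int[of j] unfolding F_def by (simp_all add: conv)
  have "(LINT x:X|lebesgue. (est x - \<theta>) \<bullet> F x) = integral\<^sup>L MX (\<lambda>x. \<Sum>j\<in>UNIV. est x $ j * F x $ j - \<theta> $ j * F x $ j)"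
    unfolding conv inner_vec_def by (simp add: algebra_simps)
  also have "\<dots> = (\<Sum>j\<in>UNIV. integral\<^sup>L MX (\<lambda>x. est x $ j * F x $ j - \<theta> $ j * F x $ j))"
    by (rule Bochner_Integration.integral_sum) (use gI in auto)
  also have "\<dots> = (\<Sum>j\<in>UNIV. D2 j - \<theta> $ j * D1 j)"
    unfolding D1_def D2_def
    by (intro sum.cong refl, subst Bochner_Integration.integral_diff) (use gI in auto)
  also have "\<dots> = (\<Sum>j\<in>UNIV. D2 j)" using D1z by simp
  finally show ?thesis unfolding div F_def by (simp add: sum_subtractf)
qed

lemma grad_exists:
  fixes h :: "real^'n \<Rightarrow> real"
  assumes "h differentiable (at t)"
  shows "(h has_derivative (\<lambda>v. grad h t \<bullet> v)) (at t)"
proof -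
  obtain D where D: "(h has_derivative D) (at t)" using assms unfolding differentiable_def by blast
  have lin: "linear D" using has_derivative_linear[OF D] .
  have "D = (\<lambda>v. adjoint D 1 \<bullet> v)"
  proof
    fix v show "D v = adjoint D 1 \<bullet> v" using adjoint_works[OF lin, of v 1] by (simp add: inner_commute)
  qed
  then have "\<exists>G. (h has_derivative (\<lambda>v. G \<bullet> v)) (at t)" using D by metis
  then show ?thesis unfolding grad_def by (rule someI_ex)
qed

lemma grad_eq:
  fixes h :: "real^'n \<Rightarrow> real"
  assumes D: "(h has_derivative (\<lambda>v. G \<bullet> v)) (at t)"
  shows "grad h t = G"
proof -
  have dh: "h differentiable (at t)" using D unfolding differentiable_def by blast
  have "(\<lambda>v. grad h t \<bullet> v) = (\<lambda>v. G \<bullet> v)"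
    by (rule has_derivative_unique[OF grad_exists[OF dh] D])
  then have "grad h t \<bullet> (grad h t - G) = G \<bullet> (grad h t - G)" by metis
  then have "(grad h t - G) \<bullet> (grad h t - G) = 0" by (simp add: inner_diff_left)
  then show ?thesis by simp
qed

lemma norm_not_diff0:
  fixes N :: "real^'n \<Rightarrow> real"
  assumes N: "is_norm N"
  shows "\<not> (N has_derivative D) (at 0)"
proof
  assume D: "(N has_derivative D) (at 0)"
  obtain x :: "real^'n" where x: "x \<noteq> 0" using axis_nth[of undefined "1::real"]
    by (metis axis_eq_0_iff zero_neq_one)
  define c where "c = N x"
  have c: "c > 0" unfolding c_def using normN_basic(3,6)[OF N, of x] x by auto
  have "((\<lambda>t. 0 + t *\<^sub>R x) has_derivative (\<lambda>t. t *\<^sub>R x)) (at 0)"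
    by (auto intro!: derivative_eq_intros)
  from has_derivative_compose[OF this, of N D] D
  have "((\<lambda>t. N (t *\<^sub>R x)) has_derivative (\<lambda>t. D (t *\<^sub>R x))) (at 0)" by simp
  moreover have "(\<lambda>t. N (t *\<^sub>R x)) = (\<lambda>t. \<bar>t\<bar> * c)"
    unfolding c_def using normN_basic(5)[OF N] by auto
  ultimately have "((\<lambda>t. \<bar>t\<bar> * c) has_derivative (\<lambda>t. D (t *\<^sub>R x))) (at 0)" by simp
  then have "((\<lambda>t::real. \<bar>t\<bar> * c) has_derivative (\<lambda>t. t * D x)) (at 0)"
    using linear_scale[OF has_derivative_linear[OF D]]
    by simp
  then have d: "((\<lambda>t::real. \<bar>t\<bar> * c) has_field_derivative D x) (at 0)"
    unfolding has_field_derivative_def by (rule has_derivative_eq_rhs) (auto simp: mult.commute)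
  then have L: "((\<lambda>h. (\<bar>0 + h\<bar> * c - \<bar>0\<bar> * c) / h) \<longlongrightarrow> D x) (at 0)"
    unfolding DERIV_def .
  have R1: "((\<lambda>h. (\<bar>0 + h\<bar> * c - \<bar>0\<bar> * c) / h) \<longlongrightarrow> D x) (at_right 0)"
    by (rule tendsto_mono[OF at_le L]) simp
  have R2: "((\<lambda>h::real. (\<bar>0 + h\<bar> * c - \<bar>0\<bar> * c) / h) \<longlongrightarrow> c) (at_right 0)"
    by (rule tendsto_eventually) (auto simp: eventually_at_right_field intro!: exI[of _ 1])
  have L1: "((\<lambda>h. (\<bar>0 + h\<bar> * c - \<bar>0\<bar> * c) / h) \<longlongrightarrow> D x) (at_left 0)"
    by (rule tendsto_mono[OF at_le L]) simp
  have L2: "((\<lambda>h::real. (\<bar>0 + h\<bar> * c - \<bar>0\<bar> * c) / h) \<longlongrightarrow> -c) (at_left 0)"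
    by (rule tendsto_eventually) (auto simp: eventually_at_left_field intro!: exI[of _ "-1"])
  have "D x = c" using tendsto_unique[OF _ R1 R2] by simp
  moreover have "D x = -c" using tendsto_unique[OF _ L1 L2] by simp
  ultimately show False using c by simp
qed

lemma qlog_deriv:
  assumes y: "y > 0"
  shows "DERIV (qlog r) y :> y powr (-r)"
proof (cases "r = 1")
  case True
  have "DERIV ln y :> inverse y" using DERIV_ln[OF y] .
  moreover have "inverse y = y powr (-r)" using True y by (simp add: powr_minus)
  moreover have "qlog r = ln" using True by (auto simp: qlog_def)
  ultimately show ?thesis by simp
next
  case False
  have q: "qlog r = (\<lambda>y. (y powr (1 - r) - 1) / (1 - r))" using False by (auto simp: qlog_def)
  have "DERIV (\<lambda>y. (y powr (1 - r) - 1) / (1 - r)) y :> ((1 - r) * y powr (1 - r - 1) - 0) / (1 - r)"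
    by (intro DERIV_cdivide DERIV_diff DERIV_const has_real_derivative_powr[OF y])
  moreover have "((1 - r) * y powr (1 - r - 1) - 0) / (1 - r) = y powr (-r)" using False by simp
  ultimately show ?thesis unfolding q by simp
qed

lemma pt_L:
  fixes u :: "real^'n \<Rightarrow> real"
  assumes d: "u differentiable (at t)" and pos: "u t > 0"
  shows "grad (\<lambda>s. ln (u s)) t = (1 / u t) *\<^sub>R grad u t"
proof (rule grad_eq)
  have "((\<lambda>s. ln (u s)) has_derivative (\<lambda>v. (grad u t \<bullet> v) * inverse (u t))) (at t)"
    by (rule DERIV_compose_FDERIV[OF DERIV_ln[OF pos] grad_exists[OF d]])
  then show "((\<lambda>s. ln (u s)) has_derivative (\<lambda>v. ((1 / u t) *\<^sub>R grad u t) \<bullet> v)) (at t)"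
    by (rule has_derivative_eq_rhs) (auto simp: field_simps)
qed

lemma pt_q:
  fixes u :: "real^'n \<Rightarrow> real"
  assumes d: "u differentiable (at t)" and pos: "u t > 0"
    and H: "((\<lambda>s. qlog r (u s)) has_derivative (\<lambda>v. H \<bullet> v)) (at t)"
  shows "H = u t powr (-r) *\<^sub>R grad u t"
proof -
  have "((\<lambda>s. qlog r (u s)) has_derivative (\<lambda>v. (grad u t \<bullet> v) * u t powr (-r))) (at t)"
    by (rule DERIV_compose_FDERIV[OF qlog_deriv[OF pos] grad_exists[OF d]])
  then have "((\<lambda>s. qlog r (u s)) has_derivative (\<lambda>v. (u t powr (-r) *\<^sub>R grad u t) \<bullet> v)) (at t)"
    by (rule has_derivative_eq_rhs) (auto simp: field_simps)
  then have "grad (\<lambda>s. qlog r (u s)) t = u t powr (-r) *\<^sub>R grad u t" by (rule grad_eq)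
  moreover have "grad (\<lambda>s. qlog r (u s)) t = H" using H by (rule grad_eq)
  ultimately show ?thesis by simp
qed

theorem corollary1:
  fixes N :: "real^'n \<Rightarrow> real"
    and X :: "(real^'m) set" and \<Theta> :: "(real^'n) set"
    and f g :: "real^'m \<Rightarrow> real^'n \<Rightarrow> real"
    and est :: "real^'m \<Rightarrow> real^'n"
    and \<theta> :: "real^'n" and q \<alpha> :: real
  assumes norm: "is_norm N"
    and X_meas: "X \<in> sets lebesgue"
    and Theta_open: "open \<Theta>" and theta_in: "\<theta> \<in> \<Theta>"
    \<comment> \<open>f, g are probability densities on X for every parameter\<close>
    and f_dens: "\<And>t. t \<in> \<Theta> \<Longrightarrow> (\<forall>x\<in>X. 0 \<le> f x t) \<and> set_integrable lebesgue X (\<lambda>x. f x t)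
                     \<and> (LINT x:X|lebesgue. f x t) = 1"
    and g_dens: "\<And>t. t \<in> \<Theta> \<Longrightarrow> (\<forall>x\<in>X. 0 \<le> g x t) \<and> set_integrable lebesgue X (\<lambda>x. g x t)
                     \<and> (LINT x:X|lebesgue. g x t) = 1"
    \<comment> \<open>f jointly measurable\<close>
    and f_joint: "(\<lambda>p. f (fst p) (snd p)) \<in> borel_measurable (lborel \<Otimes>\<^sub>M lborel)"
    \<comment> \<open>escort pair of order q > 0\<close>
    and q_pos: "q > 0"
    and escort: "\<And>t x. t \<in> \<Theta> \<Longrightarrow> x \<in> X \<Longrightarrow>
                   f x t = g x t powr q / qmass X q g t \<and> g x t = f x t powr (1/q) / qmass X (1/q) f t"
    \<comment> \<open>differentiability of f in the parameter at theta\<close>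
    and f_diff: "\<And>x. x \<in> X \<Longrightarrow> (\<lambda>t. f x t) differentiable (at \<theta>)"
    \<comment> \<open>grad_theta f absolutely continuous w.r.t. g\<close>
    and abs_cont: "\<And>x. x \<in> X \<Longrightarrow> g x \<theta> = 0 \<Longrightarrow> grad (\<lambda>t. f x t) \<theta> = 0"
    \<comment> \<open>estimator: measurable, all quantities finite\<close>
    and est_meas: "est \<in> borel_measurable lebesgue"
    and est_int: "\<And>t. t \<in> \<Theta> \<Longrightarrow> set_integrable lebesgue X (\<lambda>x. f x t *\<^sub>R est x)"
    and grad_int: "\<And>j. set_integrable lebesgue X (\<lambda>x. grad (\<lambda>t. f x t) \<theta> $ j)"
    and est_grad_int: "\<And>j. set_integrable lebesgue X (\<lambda>x. est x $ j * grad (\<lambda>t. f x t) \<theta> $ j)"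
    \<comment> \<open>differentiation under the integral sign is allowed\<close>
    and diff_int1: "\<And>j. ((\<lambda>s. LINT x:X|lebesgue. f x (\<theta> + s *\<^sub>R axis j 1))
                      has_real_derivative (LINT x:X|lebesgue. grad (\<lambda>t. f x t) \<theta> $ j)) (at 0)"
    and diff_int2: "\<And>j. ((\<lambda>s. LINT x:X|lebesgue. est x $ j * f x (\<theta> + s *\<^sub>R axis j 1))
                      has_real_derivative (LINT x:X|lebesgue. est x $ j * grad (\<lambda>t. f x t) \<theta> $ j)) (at 0)"
    \<comment> \<open>alpha >= 1 and finiteness of the moment and of the Fisher information\<close>
    and alpha_ge: "\<alpha> \<ge> 1"
    and moment_int: "set_integrable lebesgue X (\<lambda>x. N (est x - \<theta>) powr \<alpha> * g x \<theta>)"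
    and fisher_int: "\<alpha> > 1 \<Longrightarrow> set_integrable lebesgue X (\<lambda>x.
                        f x \<theta> powr (\<alpha> / (\<alpha> - 1) * (1 - 1/q))
                        * dual_norm N (grad (\<lambda>s. ln (f x s)) \<theta>) powr (\<alpha> / (\<alpha> - 1)) * g x \<theta>)"
    and fisher_ess_fin: "\<alpha> = 1 \<Longrightarrow> fisher_ess N q X f g \<theta> < \<infinity>"
  shows "((LINT x:X|lebesgue. N (est x - \<theta>) powr \<alpha> * g x \<theta>) powr (1/\<alpha>)
           * fisher_root N \<alpha> q X f g \<theta>
         \<ge> \<bar>real CARD('n) + divergence (\<lambda>t. LINT x:X|lebesgue. f x t *\<^sub>R (est x - t)) \<theta>\<bar>)
    \<and> ((\<exists>K>0. \<forall>x\<in>X. \<exists>G. (N has_derivative (\<lambda>h. G \<bullet> h)) (at (est x - \<theta>))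
              \<and> ((\<lambda>t. qlog (1/q) (f x t)) has_derivative
                    (\<lambda>h. ((K * N (est x - \<theta>) powr (\<alpha> - 1)) *\<^sub>R G) \<bullet> h)) (at \<theta>))
         \<longrightarrow> (LINT x:X|lebesgue. N (est x - \<theta>) powr \<alpha> * g x \<theta>) powr (1/\<alpha>)
               * fisher_root N \<alpha> q X f g \<theta>
             = \<bar>real CARD('n) + divergence (\<lambda>t. LINT x:X|lebesgue. f x t *\<^sub>R (est x - t)) \<theta>\<bar>)"
proof -
  define MX where "MX = restrict_space lebesgue X"
  note conv = si_conv[OF X_meas, folded MX_def] sl_conv[OF X_meas, folded MX_def]
  have spMX: "space MX = X" unfolding MX_def by simp
  define F where "F x = grad (\<lambda>t. f x t) \<theta>" for x
  define L where "L x = grad (\<lambda>s. ln (f x s)) \<theta>" for x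
  define M where "M = qmass X (1/q) f \<theta>"
  define e where "e x = est x - \<theta>" for x
  define h where "h x = M * f x \<theta> powr (1 - 1/q) * dual_norm N (L x)" for x
  define Mom where "Mom = (LINT x:X|lebesgue. N (e x) powr \<alpha> * g x \<theta>)"
  define V where "V = (LINT x:X|lebesgue. e x \<bullet> F x)"
  have Vdef: "real CARD('n) + divergence (\<lambda>t. LINT x:X|lebesgue. f x t *\<^sub>R (est x - t)) \<theta> = V"
    unfolding V_def e_def F_def
    by (rule div_identity[OF X_meas Theta_open theta_in _ est_int grad_int est_grad_int diff_int1 diff_int2])
       (use f_dens in auto)
  have f0: "\<And>x. x \<in> X \<Longrightarrow> 0 \<le> f x \<theta>" and g0: "\<And>x. x \<in> X \<Longrightarrow> 0 \<le> g x \<theta>"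
    using f_dens[OF theta_in] g_dens[OF theta_in] by auto
  have gI: "integrable MX (\<lambda>x. g x \<theta>)" and gI1: "integral\<^sup>L MX (\<lambda>x. g x \<theta>) = 1"
    using g_dens[OF theta_in] by (simp_all add: conv)
  have esc1: "\<And>x. x \<in> X \<Longrightarrow> f x \<theta> = g x \<theta> powr q / qmass X q g \<theta>"
    using escort[OF theta_in] by blast
  have esc2: "\<And>x. x \<in> X \<Longrightarrow> g x \<theta> = f x \<theta> powr (1/q) / M"
    using escort[OF theta_in] unfolding M_def by blast
  have Mpos: "M > 0"
  proof -
    have "M \<ge> 0" unfolding M_def qmass_def conv by (intro Bochner_Integration.integral_nonneg) simp
    moreover have "M \<noteq> 0"
    proof
      assume "M = 0"
      then have "\<And>x. x \<in> space MX \<Longrightarrow> g x \<theta> = 0" using esc2 spMX by simp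
      then have "integral\<^sup>L MX (\<lambda>x. g x \<theta>) = integral\<^sup>L MX (\<lambda>x. 0)"
        by (intro Bochner_Integration.integral_cong) auto
      then show False using gI1 by simp
    qed
    ultimately show ?thesis by simp
  qed
  have fz: "f x \<theta> = 0 \<longleftrightarrow> g x \<theta> = 0" if x: "x \<in> X" for x
  proof
    assume "f x \<theta> = 0" then show "g x \<theta> = 0" by (subst esc2[OF x]) simp
  next
    assume "g x \<theta> = 0" then show "f x \<theta> = 0" by (subst esc1[OF x]) (use q_pos in simp)
  qed
  have gM: "g x \<theta> * M = f x \<theta> powr (1/q)" if x: "x \<in> X" for x
    by (subst esc2[OF x]) (use Mpos in simp)
  have Fz: "\<And>x. x \<in> X \<Longrightarrow> g x \<theta> = 0 \<Longrightarrow> F x = 0"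
    using abs_cont unfolding F_def by blast
  have FL: "\<And>x. x \<in> X \<Longrightarrow> 0 < f x \<theta> \<Longrightarrow> L x = (1 / f x \<theta>) *\<^sub>R F x"
    unfolding L_def F_def by (rule pt_L[OF f_diff])
  have Fg: "F x = (g x \<theta> * M * f x \<theta> powr (1 - 1/q)) *\<^sub>R L x" if x: "x \<in> X" for x
  proof (cases "f x \<theta> = 0")
    case True then show ?thesis using fz[OF x] Fz[OF x] by simp
  next
    case False
    then have fp: "f x \<theta> > 0" using f0[OF x] by simp
    have "g x \<theta> * M * f x \<theta> powr (1 - 1/q) = f x \<theta> powr (1/q) * f x \<theta> powr (1 - 1/q)"
      using gM[OF x] by simp
    also have "\<dots> = f x \<theta>" using fp by (simp add: powr_add[symmetric])
    finally show ?thesis using FL[OF x fp] fp by simp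
  qed
  have h0: "0 \<le> h x" for x
    unfolding h_def using Mpos dual_nonneg[OF norm] by simp
  have bound: "\<bar>e x \<bullet> F x\<bar> \<le> N (e x) * g x \<theta> * h x" if x: "x \<in> X" for x
  proof -
    define c where "c = g x \<theta> * M * f x \<theta> powr (1 - 1/q)"
    have c0: "c \<ge> 0" unfolding c_def using g0[OF x] Mpos by simp
    have Fc: "F x = c *\<^sub>R L x" using Fg[OF x] unfolding c_def .
    have "\<bar>e x \<bullet> F x\<bar> = c * \<bar>e x \<bullet> L x\<bar>" using c0 by (simp add: Fc abs_mult)
    also have "\<dots> \<le> c * (N (e x) * dual_norm N (L x))"
      by (intro mult_left_mono dual_abs_ineq[OF norm] c0)
    also have "\<dots> = N (e x) * g x \<theta> * h x" unfolding c_def h_def by (simp add: algebra_simps)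
    finally show ?thesis .
  qed
  have gI2: "integrable MX (\<lambda>x. F x $ j)" "integrable MX (\<lambda>x. est x $ j * F x $ j)" for j
    using grad_int[of j] est_grad_int[of j] unfolding F_def by (simp_all add: conv)
  have eFI: "integrable MX (\<lambda>x. e x \<bullet> F x)"
  proof -
    have "integrable MX (\<lambda>x. \<Sum>j\<in>UNIV. est x $ j * F x $ j - \<theta> $ j * F x $ j)"
      using gI2 by (intro Bochner_Integration.integrable_sum Bochner_Integration.integrable_diff) auto
    moreover have "(\<lambda>x. \<Sum>j\<in>UNIV. est x $ j * F x $ j - \<theta> $ j * F x $ j) = (\<lambda>x. e x \<bullet> F x)"
      unfolding e_def inner_vec_def by (simp add: algebra_simps)
    ultimately show ?thesis by simp
  qed
  have V_le: "\<bar>V\<bar> \<le> integral\<^sup>L MX (\<lambda>x. \<bar>e x \<bullet> F x\<bar>)"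
    using integral_norm_bound[of MX "\<lambda>x. e x \<bullet> F x"] unfolding V_def conv by simp
  have MomI: "integrable MX (\<lambda>x. N (e x) powr \<alpha> * g x \<theta>)" using moment_int unfolding e_def by (simp add: conv)
  have Mom0: "Mom \<ge> 0"
    unfolding Mom_def conv by (intro Bochner_Integration.integral_nonneg) (use g0 spMX in auto)
  define \<beta> where "\<beta> = \<alpha> / (\<alpha> - 1)"
  define FI where "FI x = f x \<theta> powr (\<beta> * (1 - 1/q)) * dual_norm N (L x) powr \<beta> * g x \<theta>" for x
  have hb: "h x powr \<beta> * g x \<theta> = M powr \<beta> * FI x" for x
  proof -
    have "h x powr \<beta> = M powr \<beta> * (f x \<theta> powr (1 - 1/q)) powr \<beta> * dual_norm N (L x) powr \<beta>"
      unfolding h_def using Mpos dual_nonneg[OF norm] by (simp add: powr_mult)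
    then show ?thesis unfolding FI_def by (simp add: powr_powr mult.commute mult.left_commute)
  qed
  have root_gt: "fisher_root N \<alpha> q X f g \<theta> = (integral\<^sup>L MX (\<lambda>x. h x powr \<beta> * g x \<theta>)) powr (1/\<beta>)"
    if a1: "\<alpha> > 1"
  proof -
    have "fisher_root N \<alpha> q X f g \<theta> = fisher_info N \<beta> q X f g \<theta> powr ((\<alpha> - 1) / \<alpha>)"
      unfolding fisher_root_def \<beta>_def using a1 by simp
    also have "fisher_info N \<beta> q X f g \<theta> = M powr \<beta> * integral\<^sup>L MX FI"
      unfolding fisher_info_def M_def FI_def L_def conv ..
    also have "\<dots> = integral\<^sup>L MX (\<lambda>x. h x powr \<beta> * g x \<theta>)" unfolding hb by simp
    also have "(\<alpha> - 1) / \<alpha> = 1 / \<beta>" unfolding \<beta>_def by simp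
    finally show ?thesis .
  qed
  define Dm where "Dm = density lebesgue (\<lambda>x. indicator X x * ennreal (g x \<theta>))"
  define E where "E = esssup Dm (\<lambda>x. ereal (h x))"
  have root_1: "\<alpha> = 1 \<Longrightarrow> fisher_root N \<alpha> q X f g \<theta> = real_of_ereal E"
    unfolding fisher_root_def E_def fisher_ess_def Dm_def h_def M_def L_def by simp
  have dm: "(\<lambda>x. indicator X x * ennreal (g x \<theta>)) \<in> borel_measurable lebesgue"
  proof -
    have "(\<lambda>x. indicator X x *\<^sub>R g x \<theta>) \<in> borel_measurable lebesgue"
      using g_dens[OF theta_in] unfolding set_integrable_def by blast
    then have "(\<lambda>x. ennreal (indicator X x *\<^sub>R g x \<theta>)) \<in> borel_measurable lebesgue" by measurable
    moreover have "(\<lambda>x. ennreal (indicator X x *\<^sub>R g x \<theta>)) = (\<lambda>x. indicator X x * ennreal (g x \<theta>))"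
      by (auto simp: indicator_def)
    ultimately show ?thesis by simp
  qed
  have AEdens: "(AE x in Dm. P x) \<longleftrightarrow> (AE x in lebesgue. x \<in> X \<and> 0 < g x \<theta> \<longrightarrow> P x)" for P
  proof -
    have "(\<lambda>x. 0 < indicator X x * ennreal (g x \<theta>) \<longrightarrow> P x) = (\<lambda>x. x \<in> X \<and> 0 < g x \<theta> \<longrightarrow> P x)"
      by (auto simp: indicator_def fun_eq_iff)
    then show ?thesis unfolding Dm_def AE_density[OF dm] by (rule arg_cong)
  qed
  have Nn: "0 \<le> N v" for v using normN_basic(3)[OF norm] .
  have absI: "integrable MX (\<lambda>x. \<bar>e x \<bullet> F x\<bar>)" using eFI by (rule integrable_abs)
  have ineq: "Mom powr (1/\<alpha>) * fisher_root N \<alpha> q X f g \<theta> \<ge> \<bar>V\<bar>"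
  proof (cases "\<alpha> = 1")
    case False
    then have a1: "\<alpha> > 1" using alpha_ge by simp
    have b1: "\<beta> > 1" unfolding \<beta>_def using a1 by (simp add: field_simps)
    have ab: "1/\<alpha> + 1/\<beta> = 1" unfolding \<beta>_def using a1 by (simp add: field_simps)
    define a where "a x = (N (e x) powr \<alpha> * g x \<theta>) powr (1/\<alpha>)" for x
    define b where "b x = (h x powr \<beta> * g x \<theta>) powr (1/\<beta>)" for x
    have FII: "integrable MX FI"
      using fisher_int[OF a1] unfolding FI_def \<beta>_def L_def by (simp add: conv)
    have bbI: "integrable MX (\<lambda>x. h x powr \<beta> * g x \<theta>)" unfolding hb using FII by simp
    have ap: "a x powr \<alpha> = N (e x) powr \<alpha> * g x \<theta>" if x: "x \<in> space MX" for x
      unfolding a_def using a1 g0[of x] x spMX by (simp add: powr_powr)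
    have bp: "b x powr \<beta> = h x powr \<beta> * g x \<theta>" if x: "x \<in> space MX" for x
      unfolding b_def using b1 g0[of x] x spMX by (simp add: powr_powr)
    have aI: "integrable MX (\<lambda>x. a x powr \<alpha>)"
      using MomI by (subst Bochner_Integration.integrable_cong[OF refl ap]) auto
    have bI: "integrable MX (\<lambda>x. b x powr \<beta>)"
      using bbI by (subst Bochner_Integration.integrable_cong[OF refl bp]) auto
    have am: "a \<in> borel_measurable MX" unfolding a_def using borel_measurable_integrable[OF MomI] by measurable
    have bm: "b \<in> borel_measurable MX" unfolding b_def using borel_measurable_integrable[OF bbI] by measurable
    have H: "integrable MX (\<lambda>x. a x * b x)"
      "integral\<^sup>L MX (\<lambda>x. a x * b x) \<le> (integral\<^sup>L MX (\<lambda>x. a x powr \<alpha>)) powr (1/\<alpha>) * (integral\<^sup>L MX (\<lambda>x. b x powr \<beta>)) powr (1/\<beta>)"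
      using holder[OF a1 ab am _ aI bm _ bI] unfolding a_def b_def by auto
    have iA: "integral\<^sup>L MX (\<lambda>x. a x powr \<alpha>) = Mom"
      unfolding Mom_def conv by (rule Bochner_Integration.integral_cong[OF refl ap])
    have iB: "integral\<^sup>L MX (\<lambda>x. b x powr \<beta>) = integral\<^sup>L MX (\<lambda>x. h x powr \<beta> * g x \<theta>)"
      by (rule Bochner_Integration.integral_cong[OF refl bp])
    have pw: "\<bar>e x \<bullet> F x\<bar> \<le> a x * b x" if x: "x \<in> space MX" for x
    proof -
      have xX: "x \<in> X" using x spMX by simp
      have "a x * b x = N (e x) * h x * (g x \<theta> powr (1/\<alpha>) * g x \<theta> powr (1/\<beta>))"
        unfolding a_def b_def using g0[OF xX] h0[of x] Nn[of "e x"] a1 b1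
        by (simp add: powr_mult powr_powr)
      also have "g x \<theta> powr (1/\<alpha>) * g x \<theta> powr (1/\<beta>) = g x \<theta>"
        using g0[OF xX] by (simp add: powr_add[symmetric] ab)
      finally show ?thesis using bound[OF xX] by (simp add: mult_ac)
    qed
    have "\<bar>V\<bar> \<le> integral\<^sup>L MX (\<lambda>x. \<bar>e x \<bullet> F x\<bar>)" by (rule V_le)
    also have "\<dots> \<le> integral\<^sup>L MX (\<lambda>x. a x * b x)"
      by (rule Bochner_Integration.integral_mono[OF absI H(1) pw])
    also have "\<dots> \<le> Mom powr (1/\<alpha>) * fisher_root N \<alpha> q X f g \<theta>"
      using H(2) unfolding iA iB root_gt[OF a1] .
    finally show ?thesis .
  next
    case True
    have Efin: "E < \<infinity>" using fisher_ess_fin[OF True]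
      unfolding E_def Dm_def h_def M_def L_def fisher_ess_def by simp
    have "AE x in Dm. ereal (h x) \<le> E" unfolding E_def by (rule esssup_AE)
    then have AE1: "AE x in lebesgue. x \<in> X \<and> 0 < g x \<theta> \<longrightarrow> ereal (h x) \<le> E" using AEdens by simp
    have AE2: "AE x in MX. \<bar>e x \<bullet> F x\<bar> \<le> N (e x) * g x \<theta> * real_of_ereal E"
      unfolding MX_def
    proof (subst AE_restrict_space_iff)
      show "X \<inter> space lebesgue \<in> sets lebesgue" using X_meas by simp
      show "AE x in lebesgue. x \<in> X \<longrightarrow> \<bar>e x \<bullet> F x\<bar> \<le> N (e x) * g x \<theta> * real_of_ereal E"
        using AE1
      proof eventually_elim
        case (elim x)
        show ?case
        proof
          assume xX: "x \<in> X"
          show "\<bar>e x \<bullet> F x\<bar> \<le> N (e x) * g x \<theta> * real_of_ereal E"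
          proof (cases "g x \<theta> = 0")
            case True then show ?thesis using Fz[OF xX] by simp
          next
            case False
            then have "0 < g x \<theta>" using g0[OF xX] by simp
            then have hE: "ereal (h x) \<le> E" using elim xX by simp
            have "h x \<le> real_of_ereal E" using hE Efin by (cases E) auto
            then have "N (e x) * g x \<theta> * h x \<le> N (e x) * g x \<theta> * real_of_ereal E"
              by (intro mult_left_mono mult_nonneg_nonneg g0[OF xX] Nn)
            then show ?thesis using bound[OF xX] by linarith
          qed
        qed
      qed
    qed
    have N1: "N (e x) powr \<alpha> = N (e x)" for x using True Nn[of "e x"] by simp
    have RI: "integrable MX (\<lambda>x. N (e x) * g x \<theta> * real_of_ereal E)"
      using MomI unfolding N1 by simp
    have "\<bar>V\<bar> \<le> integral\<^sup>L MX (\<lambda>x. \<bar>e x \<bullet> F x\<bar>)" by (rule V_le)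
    also have "\<dots> \<le> integral\<^sup>L MX (\<lambda>x. N (e x) * g x \<theta> * real_of_ereal E)"
      by (rule Bochner_Integration.integral_mono_AE[OF absI RI AE2])
    also have "\<dots> = Mom * real_of_ereal E" unfolding Mom_def conv N1 by simp
    also have "\<dots> = Mom powr (1/\<alpha>) * fisher_root N \<alpha> q X f g \<theta>"
      using True Mom0 root_1[OF True] by simp
    finally show ?thesis .
  qed
  have eq: "Mom powr (1/\<alpha>) * fisher_root N \<alpha> q X f g \<theta> = \<bar>V\<bar>"
    if hyp: "\<exists>K>0. \<forall>x\<in>X. \<exists>G. (N has_derivative (\<lambda>h. G \<bullet> h)) (at (est x - \<theta>))
              \<and> ((\<lambda>t. qlog (1/q) (f x t)) has_derivative
                    (\<lambda>h. ((K * N (est x - \<theta>) powr (\<alpha> - 1)) *\<^sub>R G) \<bullet> h)) (at \<theta>)"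
  proof -
    obtain K where K: "K > 0" and KG: "\<forall>x\<in>X. \<exists>G. (N has_derivative (\<lambda>h. G \<bullet> h)) (at (est x - \<theta>))
              \<and> ((\<lambda>t. qlog (1/q) (f x t)) has_derivative
                    (\<lambda>h. ((K * N (est x - \<theta>) powr (\<alpha> - 1)) *\<^sub>R G) \<bullet> h)) (at \<theta>)"
      using hyp by blast
    have EQpt: "e x \<bullet> F x = M * K * (N (e x) powr \<alpha> * g x \<theta>)
       \<and> (0 < g x \<theta> \<longrightarrow> h x = M * K * N (e x) powr (\<alpha> - 1) \<and> N (e x) > 0)" if x: "x \<in> X" for x
    proof -
      obtain G where dN: "(N has_derivative (\<lambda>h. G \<bullet> h)) (at (e x))"
        and dq: "((\<lambda>t. qlog (1/q) (f x t)) has_derivative (\<lambda>h. ((K * N (e x) powr (\<alpha> - 1)) *\<^sub>R G) \<bullet> h)) (at \<theta>)"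
        using KG x unfolding e_def by blast
      have ex: "e x \<noteq> 0" using norm_not_diff0[OF norm] dN by metis
      have Np: "N (e x) > 0" using normN_basic(3,6)[OF norm, of "e x"] ex by auto
      show ?thesis
      proof (cases "g x \<theta> = 0")
        case True then show ?thesis using Fz[OF x] by simp
      next
        case False
        then have gp: "g x \<theta> > 0" using g0[OF x] by simp
        have fp: "f x \<theta> > 0" using fz[OF x] f0[OF x] False by fastforce
        have H: "(K * N (e x) powr (\<alpha> - 1)) *\<^sub>R G = f x \<theta> powr (-(1/q)) *\<^sub>R F x"
          unfolding F_def by (rule pt_q[OF f_diff[OF x] fp dq])
        define c where "c = f x \<theta> powr (1/q) * (K * N (e x) powr (\<alpha> - 1))"
        have Fc: "F x = c *\<^sub>R G"
        proof -
          have "f x \<theta> powr (1/q) *\<^sub>R ((K * N (e x) powr (\<alpha> - 1)) *\<^sub>R G)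
              = (f x \<theta> powr (1/q) * f x \<theta> powr (-(1/q))) *\<^sub>R F x" using H by simp
          also have "f x \<theta> powr (1/q) * f x \<theta> powr (-(1/q)) = 1" using fp by (simp add: powr_add[symmetric])
          finally show ?thesis unfolding c_def by simp
        qed
        have c0: "c \<ge> 0" unfolding c_def using K by simp
        have eG: "G \<bullet> e x = N (e x)" by (rule norm_tangent2(2)[OF norm dN])
        have NN: "N (e x) powr (\<alpha> - 1) * N (e x) = N (e x) powr \<alpha>"
          using Np powr_add[of "N (e x)" "\<alpha> - 1" 1] by simp
        have "e x \<bullet> F x = c * N (e x)" using Fc eG by (simp add: inner_commute)
        also have "\<dots> = (g x \<theta> * M) * K * (N (e x) powr (\<alpha> - 1) * N (e x))"
          unfolding c_def gM[OF x] by (simp add: mult_ac)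
        also have "\<dots> = M * K * (N (e x) powr \<alpha> * g x \<theta>)" unfolding NN by (simp add: mult_ac)
        finally have E1: "e x \<bullet> F x = M * K * (N (e x) powr \<alpha> * g x \<theta>)" .
        have Lc: "L x = (c / f x \<theta>) *\<^sub>R G" using FL[OF x fp] Fc by simp
        have DL: "dual_norm N (L x) = c / f x \<theta>"
          unfolding Lc by (rule dual_tangent[OF norm dN ex]) (use c0 fp in simp)
        have ff: "f x \<theta> powr (1 - 1/q) * f x \<theta> powr (1/q) = f x \<theta>"
          using fp by (simp add: powr_add[symmetric])
        have "h x = M * K * N (e x) powr (\<alpha> - 1) * ((f x \<theta> powr (1 - 1/q) * f x \<theta> powr (1/q)) / f x \<theta>)"
          unfolding h_def DL c_def by (simp add: mult_ac)
        also have "\<dots> = M * K * N (e x) powr (\<alpha> - 1)" unfolding ff using fp by simp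
        finally show ?thesis using E1 Np by simp
      qed
    qed
    have VK: "V = M * K * Mom"
    proof -
      have "V = integral\<^sup>L MX (\<lambda>x. M * K * (N (e x) powr \<alpha> * g x \<theta>))"
        unfolding V_def conv by (rule Bochner_Integration.integral_cong) (use EQpt spMX in auto)
      also have "\<dots> = M * K * Mom" unfolding Mom_def conv by simp
      finally show ?thesis .
    qed
    have MK: "M * K > 0" using Mpos K by simp
    show ?thesis
    proof (cases "\<alpha> = 1")
      case False
      then have a1: "\<alpha> > 1" using alpha_ge by simp
      have b1: "\<beta> > 1" unfolding \<beta>_def using a1 by (simp add: field_simps)
      have ab: "1/\<alpha> + 1/\<beta> = 1" unfolding \<beta>_def using a1 by (simp add: field_simps)
      have ab2: "(\<alpha> - 1) * \<beta> = \<alpha>" unfolding \<beta>_def using a1 by simp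
      have pw: "h x powr \<beta> * g x \<theta> = (M * K) powr \<beta> * (N (e x) powr \<alpha> * g x \<theta>)" if x: "x \<in> space MX" for x
      proof -
        have xX: "x \<in> X" using x spMX by simp
        show ?thesis
        proof (cases "g x \<theta> = 0")
          case True then show ?thesis by simp
        next
          case False
          then have "0 < g x \<theta>" using g0[OF xX] by simp
          then have hx: "h x = M * K * N (e x) powr (\<alpha> - 1)" and Np: "N (e x) > 0"
            using EQpt[OF xX] by auto
          have "h x powr \<beta> = (M * K) powr \<beta> * N (e x) powr ((\<alpha> - 1) * \<beta>)"
            unfolding hx using MK Np by (simp add: powr_mult powr_powr)
          then show ?thesis unfolding ab2 by simp
        qed
      qed
      have "integral\<^sup>L MX (\<lambda>x. h x powr \<beta> * g x \<theta>) = integral\<^sup>L MX (\<lambda>x. (M * K) powr \<beta> * (N (e x) powr \<alpha> * g x \<theta>))"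
        by (rule Bochner_Integration.integral_cong[OF refl pw])
      also have "\<dots> = (M * K) powr \<beta> * Mom" unfolding Mom_def conv by simp
      finally have I: "integral\<^sup>L MX (\<lambda>x. h x powr \<beta> * g x \<theta>) = (M * K) powr \<beta> * Mom" .
      have "fisher_root N \<alpha> q X f g \<theta> = ((M * K) powr \<beta> * Mom) powr (1/\<beta>)"
        unfolding root_gt[OF a1] I ..
      also have "\<dots> = M * K * Mom powr (1/\<beta>)"
        using MK Mom0 b1 Mpos K by (simp add: powr_mult powr_powr abs_of_pos)
      finally have R: "fisher_root N \<alpha> q X f g \<theta> = M * K * Mom powr (1/\<beta>)" .
      have "Mom powr (1/\<alpha>) * fisher_root N \<alpha> q X f g \<theta> = M * K * (Mom powr (1/\<alpha>) * Mom powr (1/\<beta>))"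
        unfolding R by (simp add: mult_ac)
      also have "Mom powr (1/\<alpha>) * Mom powr (1/\<beta>) = Mom"
        using Mom0 by (simp add: powr_add[symmetric] ab)
      finally show ?thesis using VK MK Mom0 by simp
    next
      case True
      have Efin: "E < \<infinity>" using fisher_ess_fin[OF True]
        unfolding E_def Dm_def h_def M_def L_def fisher_ess_def by simp
      have hm: "(\<lambda>x. ereal (h x)) \<in> borel_measurable Dm"
      proof (rule ccontr)
        assume "(\<lambda>x. ereal (h x)) \<notin> borel_measurable Dm"
        then have "E = top" unfolding E_def by (rule esssup_non_measurable)
        then show False using Efin by (simp add: top_ereal_def)
      qed
      have AEh: "AE x in Dm. ereal (h x) = ereal (M * K)"
        unfolding AEdens
      proof (rule AE_I2, intro impI)
        fix x assume x: "x \<in> X \<and> 0 < g x \<theta>"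
        then have "h x = M * K * N (e x) powr (\<alpha> - 1)" "N (e x) > 0" using EQpt[of x] by auto
        then show "ereal (h x) = ereal (M * K)" using True by simp
      qed
      have nz: "emeasure Dm (space Dm) \<noteq> 0"
      proof
        assume "emeasure Dm (space Dm) = 0"
        then have "ae_filter Dm = bot" by (simp add: ae_filter_eq_bot_iff)
        then have "AE x in Dm. False" by (metis eventually_bot)
        then have "AE x in lebesgue. x \<in> X \<longrightarrow> g x \<theta> = 0" unfolding AEdens
          by eventually_elim (use g0 in force)
        then have "AE x in MX. g x \<theta> = 0" unfolding MX_def using X_meas
          by (subst AE_restrict_space_iff) auto
        then have "integral\<^sup>L MX (\<lambda>x. g x \<theta>) = 0" by (rule integral_eq_zero_AE)
        then show False using gI1 by simp
      qed
      have "E = esssup Dm (\<lambda>x. ereal (M * K))"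
        unfolding E_def by (rule esssup_AE_cong[OF hm _ AEh]) simp
      also have "\<dots> = ereal (M * K)" by (rule esssup_const[OF nz])
      finally have "real_of_ereal E = M * K" by simp
      then have "Mom powr (1/\<alpha>) * fisher_root N \<alpha> q X f g \<theta> = Mom * (M * K)"
        using root_1[OF True] True Mom0 by simp
      then show ?thesis using VK MK Mom0 by simp
    qed
  qed
  show ?thesis using ineq eq unfolding Vdef Mom_def e_def by blast
qed

end
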